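(* With probability $1-o(n^{-2})$, $\mathbf m_0=e^{-d}m+O(\sqrt m\,\log^3 n)$.
   Context: Setting: $n$ individuals, $k\sim n^{\theta}$ for fixed $\theta\in(0,1)$ of them infected, the set of infected individuals being uniformly random of size $k$; constants $c,d>0$; $m=ck\log(n/k)$ tests and $\Delta=cd\log(n/k)$. Constant-column design: each individual independently is assigned to exactly $\Delta$ distinct tests chosen uniformly at random among the $m$ tests. A test is truly negative if it contains no infected individual; $\mathbf m_0$ denotes the number of truly negative tests. $\log$ natural; asymptotics as $n\to\infty$. *)

theory Defs
  imports "HOL-Probability.Probability"
begin

definition infected_pmf :: "nat \<Rightarrow> nat \<Rightarrow> nat set pmf" where
  "infected_pmf n k = pmf_of_set {S. S \<subseteq> {0..<n} \<and> card S = k}"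

definition ccdesign_pmf :: "nat \<Rightarrow> nat \<Rightarrow> nat \<Rightarrow> (nat \<Rightarrow> nat set) pmf" where
  "ccdesign_pmf n m Delta =
     Pi_pmf {0..<n} {} (\<lambda>_. pmf_of_set {T. T \<subseteq> {0..<m} \<and> card T = Delta})"

definition gt_pmf :: "nat \<Rightarrow> nat \<Rightarrow> nat \<Rightarrow> nat \<Rightarrow> (nat set \<times> (nat \<Rightarrow> nat set)) pmf" where
  "gt_pmf n k m Delta =
     bind_pmf (infected_pmf n k) (\<lambda>\<sigma>. map_pmf (\<lambda>G. (\<sigma>, G)) (ccdesign_pmf n m Delta))"

definition truly_neg :: "nat \<Rightarrow> nat set \<Rightarrow> (nat \<Rightarrow> nat set) \<Rightarrow> nat" where
  "truly_neg m \<sigma> G = card {a \<in> {0..<m}. \<forall>i\<in>\<sigma>. a \<notin> G i}"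

end

theory Submission
  imports Defs "HOL-Real_Asymp.Real_Asymp"
begin


lemma expect_pair_fin:
  fixes h :: "'a \<times> 'b \<Rightarrow> real"
  assumes "finite (set_pmf A)" "finite (set_pmf B)"
  shows "measure_pmf.expectation (pair_pmf A B) h =
         measure_pmf.expectation A (\<lambda>a. measure_pmf.expectation B (\<lambda>b. h (a, b)))"
proof -
  have "measure_pmf.expectation (pair_pmf A B) h =
        (\<Sum>z\<in>set_pmf A \<times> set_pmf B. pmf (pair_pmf A B) z *\<^sub>R h z)"
    by (rule integral_measure_pmf) (use assms in auto)
  also have "\<dots> = (\<Sum>a\<in>set_pmf A. \<Sum>b\<in>set_pmf B. pmf A a * (pmf B b * h (a, b)))"
    by (simp add: sum.cartesian_product case_prod_unfold) (intro sum.cong refl, metis pmf_pair prod.collapse mult.assoc)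
  also have "\<dots> = (\<Sum>a\<in>set_pmf A. pmf A a *\<^sub>R measure_pmf.expectation B (\<lambda>b. h (a, b)))"
    by (intro sum.cong refl, subst integral_measure_pmf[OF assms(2)])
       (auto simp: sum_distrib_left)
  also have "\<dots> = measure_pmf.expectation A (\<lambda>a. measure_pmf.expectation B (\<lambda>b. h (a, b)))"
    by (rule integral_measure_pmf[symmetric]) (use assms in auto)
  finally show ?thesis .
qed

lemma finite_set_Pi_pmf:
  assumes "finite I" "\<And>i. i \<in> I \<Longrightarrow> finite (set_pmf (p i))"
  shows "finite (set_pmf (Pi_pmf I dflt p))"
  using assms by (subst set_Pi_pmf) (auto intro!: finite_PiE_dflt)

lemma set_Pi_pmf_mem:
  assumes "finite I" "x \<in> set_pmf (Pi_pmf I dflt p)" "j \<in> I"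
  shows "x j \<in> set_pmf (p j)"
  using assms by (auto simp: set_Pi_pmf PiE_dflt_def)

lemma hoeffding_pmf:
  fixes g :: "'a \<Rightarrow> real"
  assumes "finite (set_pmf P)" "l > 0" "\<And>y. y \<in> set_pmf P \<Longrightarrow> g y \<in> {a..b}"
  shows "measure_pmf.expectation P (\<lambda>y. exp (l * (g y - measure_pmf.expectation P g)))
           \<le> exp (l\<^sup>2 * (b - a)\<^sup>2 / 8)"
proof -
  interpret interval_bounded_random_variable "measure_pmf P" g a b
  proof (unfold_locales)
    show "g \<in> borel_measurable (measure_pmf P)" by simp
    show "AE x in measure_pmf P. g x \<in> {a..b}" by (rule AE_pmfI) (rule assms(3))
  qed
  have "ennreal (measure_pmf.expectation P (\<lambda>y. exp (l * (g y - measure_pmf.expectation P g))))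
       = nn_integral P (\<lambda>y. exp (l * (g y - measure_pmf.expectation P g)))"
    by (rule nn_integral_eq_integral[symmetric]) (auto intro!: integrable_measure_pmf_finite assms)
  also have "\<dots> \<le> ennreal (exp (l\<^sup>2 * (b - a)\<^sup>2 / 8))"
    by (rule Hoeffdings_lemma_nn_integral) (use assms in auto)
  finally show ?thesis by (subst (asm) ennreal_le_iff) auto
qed

lemma mcd_mgf:
  fixes f :: "('i \<Rightarrow> 'b) \<Rightarrow> real" and c :: "'i \<Rightarrow> real"
  assumes "finite I" "\<And>i. i \<in> I \<Longrightarrow> finite (set_pmf (p i))" "l > 0"
    and "\<And>i x y. i \<in> I \<Longrightarrow> (\<forall>j\<in>I. x j \<in> set_pmf (p j)) \<Longrightarrow> (\<forall>j\<in>I. y j \<in> set_pmf (p j))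
           \<Longrightarrow> (\<forall>j. j \<noteq> i \<longrightarrow> x j = y j) \<Longrightarrow> \<bar>f x - f y\<bar> \<le> c i"
  shows "measure_pmf.expectation (Pi_pmf I dflt p)
           (\<lambda>x. exp (l * (f x - measure_pmf.expectation (Pi_pmf I dflt p) f)))
         \<le> exp (l\<^sup>2 * (\<Sum>i\<in>I. (c i)\<^sup>2) / 8)"
  using assms
proof (induction I arbitrary: f rule: finite_induct)
  case empty
  then show ?case by simp
next
  case (insert i I f)
  define M where "M = Pi_pmf I dflt p"
  define P where "P = p i"
  have finM: "finite (set_pmf M)" unfolding M_def
    by (rule finite_set_Pi_pmf) (use insert in auto)
  have finP: "finite (set_pmf P)" unfolding P_def using insert by auto
  have memM: "x j \<in> set_pmf (p j)" if "x \<in> set_pmf M" "j \<in> I" for x j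
    using set_Pi_pmf_mem[OF insert(1), of x dflt p j] that unfolding M_def by blast
  have decomp: "measure_pmf.expectation (Pi_pmf (insert i I) dflt p) h =
        measure_pmf.expectation P (\<lambda>y. measure_pmf.expectation M (\<lambda>x. h (x(i := y))))" for h :: "_ \<Rightarrow> real"
    using insert(1,2) finM finP
    by (simp add: Pi_pmf_insert M_def P_def expect_pair_fin case_prod_unfold)
  define g where "g y = measure_pmf.expectation M (\<lambda>x. f (x(i := y)))" for y
  define \<mu> where "\<mu> = measure_pmf.expectation (Pi_pmf (insert i I) dflt p) f"
  have mu: "\<mu> = measure_pmf.expectation P g" unfolding \<mu>_def g_def by (rule decomp)
  define B where "B = exp (l\<^sup>2 * (\<Sum>i\<in>I. (c i)\<^sup>2) / 8)"
  have IH: "measure_pmf.expectation M (\<lambda>x. exp (l * (f (x(i := y)) - g y))) \<le> B"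
    if y: "y \<in> set_pmf P" for y
    unfolding M_def B_def g_def
  proof (rule insert.IH)
    fix j x z assume j: "j \<in> I" and x: "\<forall>j\<in>I. x j \<in> set_pmf (p j)" and z: "\<forall>j\<in>I. z j \<in> set_pmf (p j)"
      and xz: "\<forall>k. k \<noteq> j \<longrightarrow> x k = z k"
    show "\<bar>f (x(i := y)) - f (z(i := y))\<bar> \<le> c j"
      by (rule insert.prems(3)[of j]) (use j x z xz y insert(2) in \<open>auto simp: P_def\<close>)
  qed (use insert in auto)
  have gdiff: "g y - g y' \<le> c i" if "y \<in> set_pmf P" "y' \<in> set_pmf P" for y y'
  proof -
    have "g y - g y' = measure_pmf.expectation M (\<lambda>x. f (x(i := y)) - f (x(i := y')))"
      unfolding g_def by (subst Bochner_Integration.integral_diff)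
         (auto intro!: integrable_measure_pmf_finite finM)
    also have "\<dots> \<le> measure_pmf.expectation M (\<lambda>x. c i)"
    proof (rule integral_mono_AE)
      show "AE x in measure_pmf M. f (x(i := y)) - f (x(i := y')) \<le> c i"
      proof (rule AE_pmfI)
        fix x assume x: "x \<in> set_pmf M"
        have "\<bar>f (x(i := y)) - f (x(i := y'))\<bar> \<le> c i"
          by (rule insert.prems(3)[of i]) (use that memM[OF x] insert(2) in \<open>auto simp: P_def\<close>)
        then show "f (x(i := y)) - f (x(i := y')) \<le> c i" by linarith
      qed
    qed (auto intro!: integrable_measure_pmf_finite finM)
    also have "\<dots> = c i" by simp
    finally show ?thesis .
  qed
  define a where "a = Min (g ` set_pmf P)"
  have "set_pmf P \<noteq> {}" by (rule set_pmf_not_empty)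
  then obtain y0 where y0: "y0 \<in> set_pmf P" "g y0 = a"
    unfolding a_def using finP by (metis (mono_tags, lifting) Min_in finite_imageI image_iff image_is_empty)
  have grange: "g y \<in> {a..a + c i}" if "y \<in> set_pmf P" for y
    using gdiff[OF that y0(1)] y0 that finP unfolding a_def by auto
  have "measure_pmf.expectation (Pi_pmf (insert i I) dflt p) (\<lambda>x. exp (l * (f x - \<mu>)))
      = measure_pmf.expectation P (\<lambda>y. measure_pmf.expectation M (\<lambda>x. exp (l * (f (x(i := y)) - \<mu>))))"
    by (rule decomp)
  also have "\<dots> = measure_pmf.expectation P (\<lambda>y. exp (l * (g y - \<mu>)) *
                    measure_pmf.expectation M (\<lambda>x. exp (l * (f (x(i := y)) - g y))))"
  proof (intro Bochner_Integration.integral_cong refl)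
    fix y
    have "measure_pmf.expectation M (\<lambda>x. exp (l * (f (x(i := y)) - \<mu>))) =
          measure_pmf.expectation M (\<lambda>x. exp (l * (g y - \<mu>)) * exp (l * (f (x(i := y)) - g y)))"
      by (intro Bochner_Integration.integral_cong refl) (simp add: mult_exp_exp algebra_simps)
    also have "\<dots> = exp (l * (g y - \<mu>)) * measure_pmf.expectation M (\<lambda>x. exp (l * (f (x(i := y)) - g y)))"
      by simp
    finally show "measure_pmf.expectation M (\<lambda>x. exp (l * (f (x(i := y)) - \<mu>))) =
          exp (l * (g y - \<mu>)) * measure_pmf.expectation M (\<lambda>x. exp (l * (f (x(i := y)) - g y)))" .
  qed
  also have "\<dots> \<le> measure_pmf.expectation P (\<lambda>y. exp (l * (g y - \<mu>)) * B)"
  proof (rule integral_mono_AE)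
    show "AE y in measure_pmf P. exp (l * (g y - \<mu>)) *
            measure_pmf.expectation M (\<lambda>x. exp (l * (f (x(i := y)) - g y))) \<le> exp (l * (g y - \<mu>)) * B"
      by (rule AE_pmfI) (intro mult_left_mono IH, auto)
  qed (auto intro!: integrable_measure_pmf_finite finP)
  also have "\<dots> = B * measure_pmf.expectation P (\<lambda>y. exp (l * (g y - measure_pmf.expectation P g)))"
    by (simp add: mu mult.commute)
  also have "\<dots> \<le> B * exp (l\<^sup>2 * (a + c i - a)\<^sup>2 / 8)"
    by (intro mult_left_mono hoeffding_pmf finP insert.prems grange) (auto simp: B_def)
  also have "\<dots> = exp (l\<^sup>2 * (\<Sum>i\<in>insert i I. (c i)\<^sup>2) / 8)"
    using insert(1,2) by (simp add: B_def mult_exp_exp add_divide_distrib algebra_simps)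
  finally show ?case unfolding \<mu>_def .
qed


lemma mcd_tail_upper:
  fixes f :: "('i \<Rightarrow> 'b) \<Rightarrow> real" and c :: "'i \<Rightarrow> real"
  assumes "finite I" "\<And>i. i \<in> I \<Longrightarrow> finite (set_pmf (p i))" "t > 0" "(\<Sum>i\<in>I. (c i)\<^sup>2) > 0"
    and "\<And>i x y. i \<in> I \<Longrightarrow> (\<forall>j\<in>I. x j \<in> set_pmf (p j)) \<Longrightarrow> (\<forall>j\<in>I. y j \<in> set_pmf (p j))
           \<Longrightarrow> (\<forall>j. j \<noteq> i \<longrightarrow> x j = y j) \<Longrightarrow> \<bar>f x - f y\<bar> \<le> c i"
  shows "measure_pmf.prob (Pi_pmf I dflt p)
           {x. f x - measure_pmf.expectation (Pi_pmf I dflt p) f \<ge> t}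
         \<le> exp (- 2 * t\<^sup>2 / (\<Sum>i\<in>I. (c i)\<^sup>2))"
proof -
  define S where "S = (\<Sum>i\<in>I. (c i)\<^sup>2)"
  define M where "M = Pi_pmf I dflt p"
  define \<mu> where "\<mu> = measure_pmf.expectation M f"
  define l where "l = 4 * t / S"
  have S: "S > 0" using assms unfolding S_def by auto
  have l: "l > 0" using S assms by (simp add: l_def)
  have finM: "finite (set_pmf M)" unfolding M_def by (rule finite_set_Pi_pmf) (use assms in auto)
  have "{x. f x - \<mu> \<ge> t} = {x \<in> space (measure_pmf M). exp (l * (f x - \<mu>)) \<ge> exp (l * t)}"
    using l by auto
  then have "measure_pmf.prob M {x. f x - \<mu> \<ge> t}
       = measure_pmf.prob M {x \<in> space (measure_pmf M). exp (l * (f x - \<mu>)) \<ge> exp (l * t)}" by simp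
  also have "\<dots> \<le> measure_pmf.expectation M (\<lambda>x. exp (l * (f x - \<mu>))) / exp (l * t)"
    by (rule integral_Markov_inequality_measure) (auto intro!: integrable_measure_pmf_finite finM)
  also have "\<dots> \<le> exp (l\<^sup>2 * S / 8) / exp (l * t)"
    unfolding M_def \<mu>_def S_def
    by (intro divide_right_mono mcd_mgf[OF assms(1,2) l assms(5)]) auto
  also have "\<dots> = exp (l\<^sup>2 * S / 8 - l * t)" by (simp add: exp_diff)
  also have "l\<^sup>2 * S / 8 - l * t = - 2 * t\<^sup>2 / S"
    using S by (simp add: l_def field_simps power2_eq_square)
  finally show ?thesis unfolding S_def M_def \<mu>_def .
qed

lemma mcd_tail:
  fixes f :: "('i \<Rightarrow> 'b) \<Rightarrow> real" and c :: "'i \<Rightarrow> real"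
  assumes "finite I" "\<And>i. i \<in> I \<Longrightarrow> finite (set_pmf (p i))" "t > 0" "(\<Sum>i\<in>I. (c i)\<^sup>2) > 0"
    and "\<And>i x y. i \<in> I \<Longrightarrow> (\<forall>j\<in>I. x j \<in> set_pmf (p j)) \<Longrightarrow> (\<forall>j\<in>I. y j \<in> set_pmf (p j))
           \<Longrightarrow> (\<forall>j. j \<noteq> i \<longrightarrow> x j = y j) \<Longrightarrow> \<bar>f x - f y\<bar> \<le> c i"
  shows "measure_pmf.prob (Pi_pmf I dflt p)
           {x. \<bar>f x - measure_pmf.expectation (Pi_pmf I dflt p) f\<bar> \<ge> t}
         \<le> 2 * exp (- 2 * t\<^sup>2 / (\<Sum>i\<in>I. (c i)\<^sup>2))"
proof -
  define M where "M = Pi_pmf I dflt p"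
  define \<mu> where "\<mu> = measure_pmf.expectation M f"
  have up: "measure_pmf.prob M {x. f x - \<mu> \<ge> t} \<le> exp (- 2 * t\<^sup>2 / (\<Sum>i\<in>I. (c i)\<^sup>2))"
    unfolding M_def \<mu>_def by (rule mcd_tail_upper[OF assms])
  have "measure_pmf.prob M {x. (- f x) - measure_pmf.expectation M (\<lambda>x. - f x) \<ge> t}
         \<le> exp (- 2 * t\<^sup>2 / (\<Sum>i\<in>I. (c i)\<^sup>2))"
    unfolding M_def
  proof (rule mcd_tail_upper[OF assms(1-4)])
    fix i x y assume "i \<in> I" "\<forall>j\<in>I. x j \<in> set_pmf (p j)" "\<forall>j\<in>I. y j \<in> set_pmf (p j)"
      "\<forall>j. j \<noteq> i \<longrightarrow> x j = y j"
    from assms(5)[OF this] show "\<bar>- f x - - f y\<bar> \<le> c i" by linarith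
  qed
  then have lo: "measure_pmf.prob M {x. \<mu> - f x \<ge> t} \<le> exp (- 2 * t\<^sup>2 / (\<Sum>i\<in>I. (c i)\<^sup>2))"
    by (simp add: \<mu>_def)
  have "{x. \<bar>f x - \<mu>\<bar> \<ge> t} = {x. f x - \<mu> \<ge> t} \<union> {x. \<mu> - f x \<ge> t}" by auto
  then have "measure_pmf.prob M {x. \<bar>f x - \<mu>\<bar> \<ge> t}
     \<le> measure_pmf.prob M {x. f x - \<mu> \<ge> t} + measure_pmf.prob M {x. \<mu> - f x \<ge> t}"
    by (simp add: measure_Un_le)
  with up lo show ?thesis unfolding M_def \<mu>_def by linarith
qed



lemma prob_bind_le:
  assumes "\<And>x. x \<in> set_pmf M \<Longrightarrow> measure_pmf.prob (N x) X \<le> b"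
  shows "measure_pmf.prob (bind_pmf M N) X \<le> b"
proof -
  obtain x0 where x0: "x0 \<in> set_pmf M" using set_pmf_not_empty by fast
  have b: "b \<ge> 0" using assms[OF x0] measure_nonneg[of "N x0" X] by linarith
  have "ennreal (measure_pmf.prob (bind_pmf M N) X) = emeasure (bind_pmf M N) X"
    by (simp add: measure_pmf.emeasure_eq_measure)
  also have "\<dots> = (\<integral>\<^sup>+x. emeasure (N x) X \<partial>M)" by simp
  also have "\<dots> \<le> (\<integral>\<^sup>+x. ennreal b \<partial>M)"
    by (intro nn_integral_mono_AE AE_pmfI)
       (simp add: measure_pmf.emeasure_eq_measure assms ennreal_leI)
  also have "\<dots> = ennreal b" by simp
  finally show ?thesis using b by (simp add: ennreal_le_iff)
qed

definition dsets :: "nat \<Rightarrow> nat \<Rightarrow> nat set set" where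
  "dsets m Delta = {T. T \<subseteq> {0..<m} \<and> card T = Delta}"

lemma dsets_finite: "finite (dsets m Delta)"
  unfolding dsets_def by (rule finite_subset[of _ "Pow {0..<m}"]) auto

lemma dsets_nonempty: "Delta \<le> m \<Longrightarrow> dsets m Delta \<noteq> {}"
  unfolding dsets_def by (rule ccontr) (auto dest!: spec[of _ "{0..<Delta}"])

lemma card_dsets: "card (dsets m Delta) = m choose Delta"
  unfolding dsets_def using n_subsets[of "{0..<m}" Delta] by simp

lemma card_dsets_avoid:
  assumes "a < m"
  shows "card {T \<in> dsets m Delta. a \<notin> T} = (m - 1) choose Delta"
proof -
  have "{T \<in> dsets m Delta. a \<notin> T} = {T. T \<subseteq> {0..<m} - {a} \<and> card T = Delta}"
    unfolding dsets_def by auto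
  then show ?thesis using n_subsets[of "{0..<m} - {a}" Delta] assms by simp
qed

lemma prob_avoid:
  assumes "a < m" "Delta \<le> m"
  shows "measure_pmf.prob (pmf_of_set (dsets m Delta)) {T. a \<notin> T} = 1 - real Delta / real m"
proof -
  have "measure_pmf.prob (pmf_of_set (dsets m Delta)) {T. a \<notin> T}
      = real (card (dsets m Delta \<inter> {T. a \<notin> T})) / real (card (dsets m Delta))"
    by (rule measure_pmf_of_set) (use dsets_finite dsets_nonempty assms in auto)
  also have "dsets m Delta \<inter> {T. a \<notin> T} = {T \<in> dsets m Delta. a \<notin> T}" by auto
  also have "real (card \<dots>) / real (card (dsets m Delta)) = real ((m - 1) choose Delta) / real (m choose Delta)"
    using card_dsets_avoid[OF assms(1)] card_dsets by simp
  also have "\<dots> = 1 - real Delta / real m"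
  proof -
    have pos: "(m choose Delta) > 0" using assms by simp
    have "real (m - Delta) * real (m choose Delta) = real m * real ((m - 1) choose Delta)"
      using binomial_absorb_comp[of m Delta] by (metis of_nat_mult)
    moreover have "m > 0" using assms by simp
    ultimately show ?thesis using pos assms
      by (simp add: field_simps of_nat_diff)
  qed
  finally show ?thesis .
qed


lemma expect_tn:
  assumes "\<sigma> \<subseteq> {0..<n}" "card \<sigma> = k" "Delta \<le> m"
  shows "measure_pmf.expectation (ccdesign_pmf n m Delta) (\<lambda>G. real (truly_neg m \<sigma> G))
         = real m * (1 - real Delta / real m) ^ k"
proof -
  define D where "D = ccdesign_pmf n m Delta"
  define U where "U = pmf_of_set (dsets m Delta)"
  have D: "D = Pi_pmf {0..<n} {} (\<lambda>_. U)" unfolding D_def U_def ccdesign_pmf_def dsets_def ..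
  have tn: "real (truly_neg m \<sigma> G) = (\<Sum>a\<in>{0..<m}. indicator {G. \<forall>j\<in>\<sigma>. a \<notin> G j} G)" for G
  proof -
    have "(\<Sum>a\<in>{0..<m}. indicator {G. \<forall>j\<in>\<sigma>. a \<notin> G j} G)
        = (\<Sum>a\<in>{0..<m}. if (\<forall>j\<in>\<sigma>. a \<notin> G j) then 1 else (0::real))"
      by (intro sum.cong refl) (simp add: indicator_def)
    also have "\<dots> = (\<Sum>a\<in>{a\<in>{0..<m}. \<forall>j\<in>\<sigma>. a \<notin> G j}. 1)"
      by (rule sum.inter_filter[symmetric]) simp
    also have "\<dots> = real (truly_neg m \<sigma> G)" by (simp add: truly_neg_def)
    finally show ?thesis by simp
  qed
  have fin: "finite (set_pmf D)" unfolding D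
    by (rule finite_set_Pi_pmf) (auto simp: U_def dsets_finite dsets_nonempty assms)
  have "measure_pmf.expectation D (\<lambda>G. real (truly_neg m \<sigma> G))
      = (\<Sum>a\<in>{0..<m}. measure_pmf.expectation D (indicator {G. \<forall>j\<in>\<sigma>. a \<notin> G j}))"
    unfolding tn by (rule Bochner_Integration.integral_sum) (auto intro!: integrable_measure_pmf_finite fin)
  also have "\<dots> = (\<Sum>a\<in>{0..<m}. (1 - real Delta / real m) ^ k)"
  proof (rule sum.cong[OF refl])
    fix a assume a: "a \<in> {0..<m}"
    have "measure_pmf.expectation D (indicator {G. \<forall>j\<in>\<sigma>. a \<notin> G j})
        = measure_pmf.prob D {G. \<forall>j\<in>\<sigma>. a \<notin> G j}" by simp
    also have seteq: "{G. \<forall>j\<in>\<sigma>. a \<notin> G j} = Pi {0..<n} (\<lambda>j. if j \<in> \<sigma> then {T. a \<notin> T} else UNIV)"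
      using assms(1) by (auto simp: Pi_def)
    also have "measure_pmf.prob D (Pi {0..<n} (\<lambda>j. if j \<in> \<sigma> then {T. a \<notin> T} else UNIV)) = (\<Prod>j\<in>{0..<n}. measure_pmf.prob U (if j \<in> \<sigma> then {T. a \<notin> T} else UNIV))"
      unfolding D by (rule measure_Pi_pmf_Pi) simp
    also have "\<dots> = (\<Prod>j\<in>{0..<n}. if j \<in> \<sigma> then 1 - real Delta / real m else 1)"
      by (intro prod.cong refl) (use a assms in \<open>auto simp: U_def prob_avoid\<close>)
    also have "\<dots> = (\<Prod>j\<in>{0..<n} \<inter> \<sigma>. 1 - real Delta / real m)"
      by (rule prod.inter_restrict[symmetric]) simp
    also have "{0..<n} \<inter> \<sigma> = \<sigma>" using assms(1) by auto
    finally show "measure_pmf.expectation D (indicator {G. \<forall>j\<in>\<sigma>. a \<notin> G j}) = (1 - real Delta / real m) ^ k"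
      using assms(2) seteq by simp
  qed
  also have "\<dots> = real m * (1 - real Delta / real m) ^ k" by simp
  finally show ?thesis unfolding D_def .
qed


lemma tn_le:
  assumes "i \<in> \<sigma>" "G' i \<in> dsets m Delta" "\<forall>j. j \<noteq> i \<longrightarrow> G j = G' j"
  shows "truly_neg m \<sigma> G \<le> truly_neg m \<sigma> G' + Delta"
proof -
  have sub: "{a \<in> {0..<m}. \<forall>j\<in>\<sigma>. a \<notin> G j} \<subseteq> {a \<in> {0..<m}. \<forall>j\<in>\<sigma>. a \<notin> G' j} \<union> G' i"
    using assms by auto metis
  have "truly_neg m \<sigma> G \<le> card ({a \<in> {0..<m}. \<forall>j\<in>\<sigma>. a \<notin> G' j} \<union> G' i)"
    unfolding truly_neg_def
    by (rule card_mono[OF _ sub]) (use assms(2) in \<open>auto simp: dsets_def intro: finite_subset\<close>)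
  also have "\<dots> \<le> truly_neg m \<sigma> G' + card (G' i)"
    unfolding truly_neg_def by (rule card_Un_le)
  also have "card (G' i) = Delta" using assms(2) by (simp add: dsets_def)
  finally show ?thesis .
qed

lemma tn_bd:
  assumes "G i \<in> dsets m Delta" "G' i \<in> dsets m Delta" "\<forall>j. j \<noteq> i \<longrightarrow> G j = G' j"
  shows "\<bar>real (truly_neg m \<sigma> G) - real (truly_neg m \<sigma> G')\<bar> \<le> (if i \<in> \<sigma> then real Delta else 0)"
proof (cases "i \<in> \<sigma>")
  case True
  have "truly_neg m \<sigma> G \<le> truly_neg m \<sigma> G' + Delta" by (rule tn_le[OF True assms(2,3)])
  moreover have "truly_neg m \<sigma> G' \<le> truly_neg m \<sigma> G + Delta"
    by (rule tn_le[where G=G' and G'=G]) (use True assms in auto)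
  ultimately show ?thesis using True by auto
next
  case False
  then have "truly_neg m \<sigma> G = truly_neg m \<sigma> G'"
    unfolding truly_neg_def using assms(3) by (metis (no_types, lifting))
  then show ?thesis using False by simp
qed

lemma core:
  assumes "1 \<le> k" "k \<le> n" "1 \<le> Delta" "Delta \<le> m" "t > 0"
    "\<bar>real m * (1 - real Delta / real m) ^ k - e0\<bar> + t \<le> T"
  shows "measure_pmf.prob (gt_pmf n k m Delta)
           {(\<sigma>, G). \<bar>real (truly_neg m \<sigma> G) - e0\<bar> > T}
         \<le> 2 * exp (- 2 * t\<^sup>2 / (real k * (real Delta)\<^sup>2))"
  unfolding gt_pmf_def
proof (rule prob_bind_le)
  fix \<sigma> assume "\<sigma> \<in> set_pmf (infected_pmf n k)"
  then have \<sigma>: "\<sigma> \<in> dsets n k" unfolding infected_pmf_def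
    using dsets_finite dsets_nonempty[of k n] assms by (simp add: dsets_def)
  then have \<sigma>sub: "\<sigma> \<subseteq> {0..<n}" and \<sigma>card: "card \<sigma> = k" by (auto simp: dsets_def)
  define U where "U = pmf_of_set (dsets m Delta)"
  define D where "D = ccdesign_pmf n m Delta"
  have D: "D = Pi_pmf {0..<n} {} (\<lambda>_. U)" unfolding D_def U_def ccdesign_pmf_def dsets_def ..
  have setU: "set_pmf U = dsets m Delta" unfolding U_def
    using dsets_finite dsets_nonempty[of Delta m] assms by simp
  define \<mu> where "\<mu> = measure_pmf.expectation D (\<lambda>G. real (truly_neg m \<sigma> G))"
  have mu: "\<mu> = real m * (1 - real Delta / real m) ^ k"
    unfolding \<mu>_def D_def by (rule expect_tn[OF \<sigma>sub \<sigma>card assms(4)])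
  have sumc: "(\<Sum>i\<in>{0..<n}. (if i \<in> \<sigma> then real Delta else 0)\<^sup>2) = real k * (real Delta)\<^sup>2"
  proof -
    have "(\<Sum>i\<in>{0..<n}. (if i \<in> \<sigma> then real Delta else 0)\<^sup>2) = (\<Sum>i\<in>{0..<n}. if i \<in> \<sigma> then (real Delta)\<^sup>2 else 0)"
      by (intro sum.cong) auto
    also have "\<dots> = (\<Sum>i\<in>{0..<n} \<inter> \<sigma>. (real Delta)\<^sup>2)"
      by (rule sum.inter_restrict[symmetric]) simp
    also have "{0..<n} \<inter> \<sigma> = \<sigma>" using \<sigma>sub by auto
    finally show ?thesis using \<sigma>card by simp
  qed
  have tail: "measure_pmf.prob D {G. \<bar>real (truly_neg m \<sigma> G) - \<mu>\<bar> \<ge> t}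
        \<le> 2 * exp (- 2 * t\<^sup>2 / (\<Sum>i\<in>{0..<n}. (if i \<in> \<sigma> then real Delta else 0)\<^sup>2))"
    unfolding \<mu>_def D
  proof (rule mcd_tail)
    show "0 < (\<Sum>i\<in>{0..<n}. (if i \<in> \<sigma> then real Delta else 0)\<^sup>2)"
      unfolding sumc using assms by simp
    fix i and x y :: "nat \<Rightarrow> nat set"
    assume "i \<in> {0..<n}" "\<forall>j\<in>{0..<n}. x j \<in> set_pmf U" "\<forall>j\<in>{0..<n}. y j \<in> set_pmf U"
      "\<forall>j. j \<noteq> i \<longrightarrow> x j = y j"
    then show "\<bar>real (truly_neg m \<sigma> x) - real (truly_neg m \<sigma> y)\<bar> \<le> (if i \<in> \<sigma> then real Delta else 0)"
      by (intro tn_bd) (auto simp: setU)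
  qed (use assms dsets_nonempty[of Delta m] in \<open>auto simp: U_def dsets_finite\<close>)
  have "measure_pmf.prob (map_pmf (Pair \<sigma>) D) {(\<sigma>, G). \<bar>real (truly_neg m \<sigma> G) - e0\<bar> > T}
      = measure_pmf.prob D {G. \<bar>real (truly_neg m \<sigma> G) - e0\<bar> > T}"
    by (simp add: vimage_def)
  also have "\<dots> \<le> measure_pmf.prob D {G. \<bar>real (truly_neg m \<sigma> G) - \<mu>\<bar> \<ge> t}"
    by (rule measure_pmf.finite_measure_mono) (use assms(6) mu in auto)
  also have "\<dots> \<le> 2 * exp (- 2 * t\<^sup>2 / (real k * (real Delta)\<^sup>2))"
    using tail unfolding sumc .
  finally show "measure_pmf.prob (map_pmf (Pair \<sigma>) (ccdesign_pmf n m Delta))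
          {(\<sigma>, G). \<bar>real (truly_neg m \<sigma> G) - e0\<bar> > T} \<le> 2 * exp (- 2 * t\<^sup>2 / (real k * (real Delta)\<^sup>2))"
    unfolding D_def .
qed



lemma exp_lip_aux:
  fixes u v :: real
  assumes "v \<le> u" "u \<le> 0"
  shows "exp u - exp v \<le> u - v"
proof -
  define w where "w = exp (v - u)"
  have e: "exp v = exp u * w" by (simp add: w_def mult_exp_exp)
  have "1 + (v - u) \<le> w" unfolding w_def by (rule exp_ge_add_one_self)
  then have h: "exp u * (1 + (v - u)) \<le> exp u * w" by (intro mult_left_mono) auto
  have "exp u - exp v \<le> exp u * (u - v)" unfolding e using h by (simp add: algebra_simps)
  also have "\<dots> \<le> 1 * (u - v)" using assms by (intro mult_right_mono) auto
  finally show ?thesis by simp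
qed

lemma exp_lip:
  fixes u v :: real
  assumes "u \<le> 0" "v \<le> 0"
  shows "\<bar>exp u - exp v\<bar> \<le> \<bar>u - v\<bar>"
proof (cases "v \<le> u")
  case True
  then show ?thesis using exp_lip_aux[OF True assms(1)] by auto
next
  case False
  then show ?thesis using exp_lip_aux[of u v] assms by auto
qed

lemma det_bound:
  fixes d m D :: real and k :: nat
  assumes d: "d > 0" and k: "real k \<ge> 1" and D: "D \<ge> 1" and mD: "2 * D \<le> m"
    and km: "\<bar>m - real k * D / d\<bar> \<le> 1"
  shows "\<bar>m * (1 - D / m) ^ k - exp (- d) * m\<bar> \<le> 4 * d * D + d"
proof -
  define p where "p = D / m"
  have m: "m \<ge> 2" using D mD by linarith
  have p0: "p > 0" and p1: "p \<le> 1/2" using m D mD by (auto simp: p_def field_simps)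
  define u where "u = real k * ln (1 - p)"
  have pow: "(1 - p) ^ k = exp u"
    using p1 by (simp add: u_def exp_of_nat_mult[symmetric] ln_realpow[symmetric])
  have lnl: "- p - 2 * p\<^sup>2 \<le> ln (1 - p)" by (rule ln_one_minus_pos_lower_bound) (use p0 p1 in auto)
  have lnu: "ln (1 - p) \<le> - p" using ln_le_minus_one[of "1 - p"] p1 by simp
  have kp: "real k * p \<le> 2 * d"
  proof -
    have "real k * D / d \<le> m + 1" using km by linarith
    then have "real k * D \<le> d * (m + 1)" using d by (simp add: field_simps)
    also have "\<dots> \<le> d * (2 * m)" using d m by (intro mult_left_mono) auto
    finally show ?thesis using m by (simp add: p_def field_simps)
  qed
  have u1: "\<bar>u + real k * p\<bar> \<le> 2 * real k * p\<^sup>2"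
  proof -
    have "real k * (- p - 2 * p\<^sup>2) \<le> u" unfolding u_def using lnl by (intro mult_left_mono) auto
    moreover have "u \<le> real k * (- p)" unfolding u_def using lnu by (intro mult_left_mono) auto
    ultimately show ?thesis by (auto simp: algebra_simps)
  qed
  have u2: "2 * real k * p\<^sup>2 \<le> 4 * d * D / m"
  proof -
    have "2 * real k * p\<^sup>2 = 2 * (real k * p * p)" by (simp add: power2_eq_square)
    also have "\<dots> \<le> 2 * (2 * d * p)" using mult_right_mono[OF kp, of p] p0 by (simp add: mult_ac)
    also have "\<dots> = 4 * d * D / m" by (simp add: p_def)
    finally show ?thesis .
  qed
  have u3: "\<bar>real k * p - d\<bar> \<le> d / m"
  proof -
    have "real k * p - d = d * (real k * D / d - m) / m" using d m by (simp add: p_def field_simps)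
    then have "\<bar>real k * p - d\<bar> = d * \<bar>real k * D / d - m\<bar> / m" using d m by (simp add: abs_mult)
    also have "\<dots> \<le> d * 1 / m" using km d m by (intro divide_right_mono mult_left_mono) auto
    finally show ?thesis by simp
  qed
  have "\<bar>(1 - p) ^ k - exp (- d)\<bar> \<le> \<bar>u - (- d)\<bar>" unfolding pow
    by (rule exp_lip) (use lnu p0 d in \<open>auto simp: u_def intro!: mult_nonneg_nonpos\<close>)
  also have "\<dots> \<le> \<bar>u + real k * p\<bar> + \<bar>real k * p - d\<bar>" by linarith
  also have "\<dots> \<le> 4 * d * D / m + d / m" using u1 u2 u3 by linarith
  finally have *: "\<bar>(1 - p) ^ k - exp (- d)\<bar> \<le> (4 * d * D + d) / m" by (simp add: add_divide_distrib)
  have "\<bar>m * (1 - D / m) ^ k - exp (- d) * m\<bar> = m * \<bar>(1 - p) ^ k - exp (- d)\<bar>"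
    using m by (simp add: p_def abs_mult right_diff_distrib[symmetric] mult.commute)
  also have "\<dots> \<le> m * ((4 * d * D + d) / m)" using * m by (intro mult_left_mono) auto
  also have "\<dots> = 4 * d * D + d" using m by simp
  finally show ?thesis .
qed


theorem lemmaA4:
  fixes \<theta> c d :: real and k m Delta :: "nat \<Rightarrow> nat"
  assumes theta: "0 < \<theta>" "\<theta> < 1"
    and cd: "c > 0" "d > 0"
    and k_asymp: "(\<lambda>n. real (k n) / real n powr \<theta>) \<longlonglongrightarrow> 1"
    and Delta_def: "eventually (\<lambda>n. \<bar>real (Delta n) - c * d * ln (real n / real (k n))\<bar> \<le> 1) sequentially"
    and m_def: "eventually (\<lambda>n. \<bar>real (m n) - real (k n) * real (Delta n) / d\<bar> \<le> 1) sequentially"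
  shows "\<exists>C. (\<lambda>n. real n ^ 2 *
            measure_pmf.prob (gt_pmf n (k n) (m n) (Delta n))
              {(\<sigma>, G). \<bar>real (truly_neg (m n) \<sigma> G) - exp (- d) * real (m n)\<bar>
                        > C * sqrt (real (m n)) * ln (real n) ^ 3}) \<longlonglongrightarrow> 0"
proof (intro exI[of _ 2])
  define b where "b n = 2 * real n ^ 2 * exp (- (ln (real n) ^ 6 / (d * (c * d * ln (real n) + 1))))" for n :: nat
  have lim: "b \<longlonglongrightarrow> 0" unfolding b_def using cd by real_asymp
  have E1: "eventually (\<lambda>n. 1/2 < real (k n) / real n powr \<theta>) sequentially"
    by (rule order_tendstoD(1)[OF k_asymp]) simp
  have E2: "eventually (\<lambda>n. real (k n) / real n powr \<theta> < 2) sequentially"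
    by (rule order_tendstoD(2)[OF k_asymp]) simp
  have E5: "eventually (\<lambda>n. 2 * real n powr \<theta> \<le> real n) sequentially"
    using theta by real_asymp
  have E6: "eventually (\<lambda>n. 1 + 4 * d \<le> real n powr \<theta> / 2) sequentially"
    using theta by real_asymp
  have E7: "eventually (\<lambda>n. 2 \<le> c * d * ((1 - \<theta>) * ln (real n) - ln 2)) sequentially"
    using theta cd by real_asymp
  have E8: "eventually (\<lambda>n. 4 * d * (c * d * ln (real n) + 1) + d \<le> ln (real n) ^ 3) sequentially"
    using cd by real_asymp
  have E9: "eventually (\<lambda>n. 1 \<le> ln (real n)) sequentially"
    by real_asymp
  have ev: "eventually (\<lambda>n. real n ^ 2 *
            measure_pmf.prob (gt_pmf n (k n) (m n) (Delta n))
              {(\<sigma>, G). \<bar>real (truly_neg (m n) \<sigma> G) - exp (- d) * real (m n)\<bar>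
                        > 2 * sqrt (real (m n)) * ln (real n) ^ 3} \<le> b n) sequentially"
    using E1 E2 Delta_def m_def E5 E6 E7 E8 E9
  proof eventually_elim
    case (elim n)
    define x where "x = real n"
    define K where "K = real (k n)"
    define D where "D = real (Delta n)"
    define M where "M = real (m n)"
    define L where "L = ln x"
    have L1: "1 \<le> L" using elim(9) by (simp add: L_def x_def)
    have x0: "x > 0"
    proof (rule ccontr)
      assume "\<not> x > 0"
      then have "x = 0" by (simp add: x_def)
      then show False using L1 by (simp add: L_def)
    qed
    have xp: "x powr \<theta> > 0" using x0 by simp
    have Klo: "x powr \<theta> / 2 < K" using elim(1) xp by (simp add: x_def K_def field_simps)
    have Khi: "K < 2 * x powr \<theta>" using elim(2) xp by (simp add: x_def K_def field_simps)
    have K4: "1 + 4 * d \<le> K" using Klo elim(6) by (simp add: x_def)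
    have K1: "1 \<le> K" using K4 cd by linarith
    have Kn: "K \<le> x" using Khi elim(5) by (simp add: x_def)
    have lnK: "(1 - \<theta>) * L - ln 2 \<le> ln (x / K)"
    proof -
      have "x / (2 * x powr \<theta>) \<le> x / K" using K1 Khi x0 by (intro divide_left_mono) auto
      then have "ln (x / (2 * x powr \<theta>)) \<le> ln (x / K)" using x0 xp K1 by (subst ln_le_cancel_iff) auto
      moreover have "ln (x / (2 * x powr \<theta>)) = (1 - \<theta>) * L - ln 2"
        using x0 by (simp add: ln_div ln_mult ln_powr L_def algebra_simps)
      ultimately show ?thesis by simp
    qed
    have lnK2: "ln (x / K) \<le> L" using K1 x0 by (simp add: ln_div L_def)
    have DD: "\<bar>D - c * d * ln (x / K)\<bar> \<le> 1" using elim(3) by (simp add: D_def x_def K_def)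
    have cdpos: "c * d > 0" using cd by simp
    have D1: "1 \<le> D"
    proof -
      have "c * d * ((1 - \<theta>) * L - ln 2) \<le> c * d * ln (x / K)"
        using lnK cdpos by (intro mult_left_mono) auto
      then show ?thesis using DD elim(7) by (simp add: L_def x_def)
    qed
    have Dup: "D \<le> c * d * L + 1"
    proof -
      have "c * d * ln (x / K) \<le> c * d * L" using lnK2 cdpos by (intro mult_left_mono) auto
      then show ?thesis using DD by linarith
    qed
    have MM: "\<bar>M - K * D / d\<bar> \<le> 1" using elim(4) by (simp add: M_def K_def D_def)
    define Q where "Q = K * D / d"
    have MQ: "\<bar>M - Q\<bar> \<le> 1" using MM by (simp add: Q_def)
    have KD4: "4 * D \<le> Q"
    proof -
      have "4 * d * D \<le> K * D" using K4 D1 cd by (intro mult_right_mono) auto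
      then show ?thesis using cd by (simp add: field_simps Q_def)
    qed
    have mD: "2 * D \<le> M" using MQ KD4 D1 by linarith
    have Mge: "K * D / (2 * d) \<le> M"
    proof -
      have "K * D / (2 * d) = Q / 2" by (simp add: Q_def)
      then show ?thesis using MQ KD4 D1 by linarith
    qed
    have M1: "M \<ge> 1" using mD D1 by linarith
    have det: "\<bar>M * (1 - D / M) ^ k n - exp (- d) * M\<bar> \<le> 4 * d * D + d"
      by (rule det_bound) (use cd K1 D1 mD MM in \<open>auto simp: K_def\<close>)
    have sq1: "1 \<le> sqrt M" using M1 by simp
    have L3: "0 \<le> L ^ 3" using L1 by simp
    have "4 * d * D + d \<le> 4 * d * (c * d * L + 1) + d"
      using Dup cd by (simp add: mult_left_mono)
    also have "\<dots> \<le> L ^ 3" using elim(8) by (simp add: L_def x_def)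
    also have "\<dots> \<le> sqrt M * L ^ 3" using sq1 L3 by (simp add: mult_right_mono[of 1 "sqrt M" "L^3", simplified])
    finally have det2: "\<bar>M * (1 - D / M) ^ k n - exp (- d) * M\<bar> + sqrt M * L ^ 3 \<le> 2 * sqrt M * L ^ 3"
      using det by linarith
    have tpos: "sqrt M * L ^ 3 > 0" using sq1 L1 by simp
    have kn1: "1 \<le> k n" using K1 by (simp add: K_def)
    have knn: "k n \<le> n" using Kn by (simp add: K_def x_def)
    have Dn1: "1 \<le> Delta n" using D1 by (simp add: D_def)
    have Dm: "Delta n \<le> m n" using mD D1 by (simp add: D_def M_def)
    have prob: "measure_pmf.prob (gt_pmf n (k n) (m n) (Delta n))
              {(\<sigma>, G). \<bar>real (truly_neg (m n) \<sigma> G) - exp (- d) * real (m n)\<bar>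
                        > 2 * sqrt (real (m n)) * ln (real n) ^ 3}
           \<le> 2 * exp (- 2 * (sqrt M * L ^ 3)\<^sup>2 / (K * D\<^sup>2))"
      unfolding K_def D_def
      by (rule core[OF kn1 knn Dn1 Dm tpos]) (use det2 in \<open>simp add: M_def D_def L_def x_def\<close>)
    define A where "A = L ^ 6"
    have A0: "A \<ge> 0" using L1 by (simp add: A_def)
    have t2: "(sqrt M * L ^ 3)\<^sup>2 = M * A" using M1 by (simp add: A_def power_mult_distrib power2_eq_square[of "L^3", symmetric] power_mult[symmetric])
    have Kpos: "K > 0" using K1 by simp
    have Dpos: "D > 0" using D1 by simp
    have "A / (d * (c * d * L + 1)) \<le> A / (d * D)"
      using A0 cd Dpos Dup by (intro divide_left_mono mult_left_mono mult_pos_pos) auto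
    also have "A / (d * D) = 2 * (K * D / (2 * d)) * A / (K * D\<^sup>2)"
      using cd Kpos Dpos by (simp add: field_simps power2_eq_square)
    also have "\<dots> \<le> 2 * M * A / (K * D\<^sup>2)"
      using Mge A0 Kpos Dpos by (intro divide_right_mono mult_right_mono mult_left_mono) auto
    finally have expo: "- 2 * (sqrt M * L ^ 3)\<^sup>2 / (K * D\<^sup>2) \<le> - (A / (d * (c * d * L + 1)))"
      unfolding t2 by simp
    have "real n ^ 2 * measure_pmf.prob (gt_pmf n (k n) (m n) (Delta n))
              {(\<sigma>, G). \<bar>real (truly_neg (m n) \<sigma> G) - exp (- d) * real (m n)\<bar>
                        > 2 * sqrt (real (m n)) * ln (real n) ^ 3}
          \<le> real n ^ 2 * (2 * exp (- 2 * (sqrt M * L ^ 3)\<^sup>2 / (K * D\<^sup>2)))"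
      by (intro mult_left_mono prob) simp
    also have "\<dots> \<le> real n ^ 2 * (2 * exp (- (A / (d * (c * d * L + 1)))))"
      using expo by (intro mult_left_mono) auto
    also have "\<dots> = b n" by (simp add: b_def A_def L_def x_def)
    finally show ?case .
  qed
  have ev0: "eventually (\<lambda>n. 0 \<le> real n ^ 2 *
            measure_pmf.prob (gt_pmf n (k n) (m n) (Delta n))
              {(\<sigma>, G). \<bar>real (truly_neg (m n) \<sigma> G) - exp (- d) * real (m n)\<bar>
                        > 2 * sqrt (real (m n)) * ln (real n) ^ 3}) sequentially"
    by (intro always_eventually allI mult_nonneg_nonneg) auto
  show "(\<lambda>n. real n ^ 2 *
            measure_pmf.prob (gt_pmf n (k n) (m n) (Delta n))
              {(\<sigma>, G). \<bar>real (truly_neg (m n) \<sigma> G) - exp (- d) * real (m n)\<bar>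
                        > 2 * sqrt (real (m n)) * ln (real n) ^ 3}) \<longlonglongrightarrow> 0"
    by (rule tendsto_sandwich[OF ev0 ev tendsto_const lim])
qed


end
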